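(* Let $a,b>0$ with $a\ne b$ and $\nu\in(0,1)$. Then $$\widetilde r(\nu)\big(\sqrt a-\sqrt b\big)^2\le a\nabla_\nu b-L_\nu(a,b)\le \widetilde R(\nu)\big(\sqrt a-\sqrt b\big)^2$$ and $$K(a,b)^{\widetilde r(\nu)}\,a\sharp_\nu b\le I_\nu(a,b)\le K(a,b)^{\widetilde R(\nu)}\,a\sharp_\nu b .$$
   Context: $a\nabla_\nu b:=(1-\nu)a+\nu b$, $a\sharp_\nu b:=a^{1-\nu}b^\nu$. Weighted logarithmic mean: $L_\nu(a,b):=\frac{1}{\log a-\log b}\left\{\frac{1-\nu}{\nu}(a-a^{1-\nu}b^\nu)+\frac{\nu}{1-\nu}(a^{1-\nu}b^\nu-b)\right\}$. Kantorovich constant: $K(a,b):=\frac{(a+b)^2}{4ab}$. Weighted identric mean: $$I_\nu(a,b):=\frac1e\,\big(a\nabla_\nu b\big)^{\frac{(1-2\nu)(a\nabla_\nu b)}{\nu(1-\nu)(b-a)}}\left(\frac{b^{\frac{\nu b}{1-\nu}}}{a^{\frac{(1-\nu)a}{\nu}}}\right)^{\frac{1}{b-a}}.$$ For $\lambda\in[0,1]$ let $r_1(\lambda)=\min\{\nu\lambda,1-\nu\lambda\}$, $r_2(\lambda)=\min\{(1-\nu)\lambda,1-(1-\nu)\lambda\}$, $R_1(\lambda)=\max\{\nu\lambda,1-\nu\lambda\}$, $R_2(\lambda)=\max\{(1-\nu)\lambda,1-(1-\nu)\lambda\}$, and $\widetilde r(\nu):=\int_0^1((1-\nu)r_1(\lambda)+\nu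 r_2(\lambda))d\lambda$, $\widetilde R(\nu):=\int_0^1((1-\nu)R_1(\lambda)+\nu R_2(\lambda))d\lambda$. *)

theory Defs
  imports "HOL-Analysis.Analysis"
begin

definition wam :: "real \<Rightarrow> real \<Rightarrow> real \<Rightarrow> real" where
  "wam \<nu> a b = (1 - \<nu>) * a + \<nu> * b"

definition wgm :: "real \<Rightarrow> real \<Rightarrow> real \<Rightarrow> real" where
  "wgm \<nu> a b = a powr (1 - \<nu>) * b powr \<nu>"

definition wlm :: "real \<Rightarrow> real \<Rightarrow> real \<Rightarrow> real" where
  "wlm \<nu> a b = (1 / (ln a - ln b)) *
     ((1 - \<nu>) / \<nu> * (a - wgm \<nu> a b) + \<nu> / (1 - \<nu>) * (wgm \<nu> a b - b))"

definition kantorovich :: "real \<Rightarrow> real \<Rightarrow> real" where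
  "kantorovich a b = (a + b)^2 / (4 * a * b)"

definition wim :: "real \<Rightarrow> real \<Rightarrow> real \<Rightarrow> real" where
  "wim \<nu> a b = (1 / exp 1) *
     (wam \<nu> a b) powr (((1 - 2 * \<nu>) * wam \<nu> a b) / (\<nu> * (1 - \<nu>) * (b - a))) *
     ((b powr (\<nu> * b / (1 - \<nu>))) / (a powr ((1 - \<nu>) * a / \<nu>))) powr (1 / (b - a))"

definition r1 :: "real \<Rightarrow> real \<Rightarrow> real" where "r1 \<nu> t = min (\<nu> * t) (1 - \<nu> * t)"
definition r2 :: "real \<Rightarrow> real \<Rightarrow> real" where "r2 \<nu> t = min ((1 - \<nu>) * t) (1 - (1 - \<nu>) * t)"
definition R1 :: "real \<Rightarrow> real \<Rightarrow> real" where "R1 \<nu> t = max (\<nu> * t) (1 - \<nu> * t)"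
definition R2 :: "real \<Rightarrow> real \<Rightarrow> real" where "R2 \<nu> t = max ((1 - \<nu>) * t) (1 - (1 - \<nu>) * t)"

definition r_tilde :: "real \<Rightarrow> real" where
  "r_tilde \<nu> = integral {0..1} (\<lambda>t. (1 - \<nu>) * r1 \<nu> t + \<nu> * r2 \<nu> t)"

definition R_tilde :: "real \<Rightarrow> real" where
  "R_tilde \<nu> = integral {0..1} (\<lambda>t. (1 - \<nu>) * R1 \<nu> t + \<nu> * R2 \<nu> t)"

end

theory Submission
  imports Defs
begin

lemma exp_conv:
  fixes \<alpha> x y :: real
  assumes "0 \<le> \<alpha>" "\<alpha> \<le> 1"
  shows "exp (\<alpha>*x + (1-\<alpha>)*y) \<le> \<alpha>*exp x + (1-\<alpha>)*exp y"
  using Youngs_inequality_0[of \<alpha> "1-\<alpha>" "exp x" "exp y"] assms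
  by (simp add: powr_def exp_add mult.commute)

lemma wgm_exp: "a > 0 \<Longrightarrow> b > 0 \<Longrightarrow> wgm \<mu> a b = exp ((1-\<mu>)*ln a + \<mu>*ln b)"
  by (simp add: wgm_def powr_def exp_add mult.commute)

lemma sqrt_exp: "a > 0 \<Longrightarrow> sqrt a = exp (ln a / 2)"
  using powr_half_sqrt[of a] by (simp add: powr_def)

lemma half_lemmas:
  fixes a b \<mu> :: real
  assumes a: "a > 0" and b: "b > 0" and m0: "0 \<le> \<mu>" and m1: "\<mu> \<le> 1/2"
  defines "c \<equiv> (sqrt a - sqrt b)^2" and "k \<equiv> 2*ln ((a+b)/2) - ln a - ln b"
  shows "\<mu> * c \<le> wam \<mu> a b - wgm \<mu> a b"
    and "wam \<mu> a b - wgm \<mu> a b \<le> (1-\<mu>) * c"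
    and "\<mu> * k + ln (wgm \<mu> a b) \<le> ln (wam \<mu> a b)"
    and "ln (wam \<mu> a b) \<le> (1-\<mu>) * k + ln (wgm \<mu> a b)"
proof -
  define p q where "p = ln a" "q = ln b"
  have ea: "exp p = a" and eb: "exp q = b" using a b by (auto simp: p_q_def)
  define s where "s = exp ((p+q)/2)"
  have s: "sqrt a * sqrt b = s" using a b by (simp add: s_def sqrt_exp p_q_def exp_add[symmetric] add_divide_distrib)
  have c: "c = a + b - 2* s" unfolding c_def using a b s[symmetric]
    by (simp add: power2_diff)
  have g: "wgm \<mu> a b = exp ((1-\<mu>)*p + \<mu>*q)" using wgm_exp a b p_q_def by simp
  have w: "wam \<mu> a b = (1-\<mu>)*a + \<mu>*b" by (simp add: wam_def)
  have "exp ((1-\<mu>)*p + \<mu>*q) = exp ((1-2*\<mu>)*p + (1-(1-2*\<mu>))*((p+q)/2))"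
    by (simp add: algebra_simps)
  also have "\<dots> \<le> (1-2*\<mu>)*a + (1-(1-2*\<mu>))* s"
    using exp_conv[of "1-2*\<mu>" p "(p+q)/2"] m0 m1 ea s_def by simp
  finally have L: "wgm \<mu> a b \<le> (1-2*\<mu>)*a + 2*\<mu>* s" using g by simp
  then show "\<mu> * c \<le> wam \<mu> a b - wgm \<mu> a b" using L by (simp add: c w algebra_simps)
  define \<alpha> where "\<alpha> = 1/(2-2*\<mu>)"
  have al: "0 \<le> \<alpha>" "\<alpha> \<le> 1" using m0 m1 by (auto simp: \<alpha>_def field_simps)
  have h': "\<alpha>*(1-\<mu>) = 1/2" using m1 by (simp add: \<alpha>_def field_simps)
  have "\<alpha>*((1-\<mu>)*p + \<mu>*q) + (1-\<alpha>)*q = (\<alpha>*(1-\<mu>))*p + (1 - \<alpha>*(1-\<mu>))*q"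
    by (simp add: algebra_simps)
  then have "(p+q)/2 = \<alpha>*((1-\<mu>)*p + \<mu>*q) + (1-\<alpha>)*q" by (simp add: h' field_simps)
  then have ss: "s = exp (\<alpha>*((1-\<mu>)*p + \<mu>*q) + (1-\<alpha>)*q)" unfolding s_def by (rule arg_cong)
  have "exp (\<alpha>*((1-\<mu>)*p + \<mu>*q) + (1-\<alpha>)*q) \<le> \<alpha>*exp ((1-\<mu>)*p + \<mu>*q) + (1-\<alpha>)*exp q"
    by (rule exp_conv[OF al])
  then have "s \<le> \<alpha>*wgm \<mu> a b + (1-\<alpha>)*b"
    by (simp only: ss[symmetric] g[symmetric] eb)
  then have "(2-2*\<mu>)* s \<le> (2-2*\<mu>)*(\<alpha>*wgm \<mu> a b + (1-\<alpha>)*b)"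
    using m1 by (intro mult_left_mono) auto
  also have "\<dots> = ((2-2*\<mu>)*\<alpha>)*wgm \<mu> a b + (2-2*\<mu>)*b - ((2-2*\<mu>)*\<alpha>)*b"
    by (simp add: algebra_simps)
  also have "\<dots> = wgm \<mu> a b + (1-2*\<mu>)*b" using m1 by (simp add: \<alpha>_def algebra_simps)
  finally show "wam \<mu> a b - wgm \<mu> a b \<le> (1-\<mu>) * c" by (simp add: c w algebra_simps)
  define m where "m = (a+b)/2"
  have mpos: "m > 0" using a b by (simp add: m_def)
  have k: "k = 2*ln m - p - q" by (simp add: k_def m_def p_q_def)
  have wm: "wam \<mu> a b = (1-2*\<mu>)*a + (1-(1-2*\<mu>))*m" by (simp add: wam_def m_def algebra_simps)
  have wpos: "wam \<mu> a b > 0" proof -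
    have "(1-\<mu>)*a > 0" using a m1 by simp
    moreover have "\<mu>*b \<ge> 0" using b m0 by simp
    ultimately show ?thesis by (simp add: wam_def)
  qed
  have lg: "ln (wgm \<mu> a b) = (1-\<mu>)*p + \<mu>*q" using g by simp
  have "exp ((1-2*\<mu>)*p + (1-(1-2*\<mu>))*ln m) \<le> wam \<mu> a b"
    using exp_conv[of "1-2*\<mu>" p "ln m"] m0 m1 ea mpos wm by simp
  moreover have "\<mu> * k + ln (wgm \<mu> a b) = (1-2*\<mu>)*p + (1-(1-2*\<mu>))*ln m"
    by (simp add: k lg algebra_simps)
  ultimately show "\<mu> * k + ln (wgm \<mu> a b) \<le> ln (wam \<mu> a b)" using ln_ge_iff[OF wpos] by simp
  define t where "t = 1 - 2*\<mu>"
  have t0: "0 \<le> t" using m1 by (simp add: t_def)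
  have E: "(1-\<mu>) * k + ln (wgm \<mu> a b) = ln m + (-t*(q - ln m))"
    by (simp add: k lg t_def algebra_simps)
  have "q - ln m = ln (b/m)" using b mpos by (simp add: p_q_def ln_div)
  also have "\<dots> \<le> b/m - 1" using b mpos by (intro ln_le_minus_one) simp
  finally have "1 - t*(b/m - 1) \<le> 1 + (-t*(q - ln m))" using t0 by (simp add: mult_left_mono)
  also have "\<dots> \<le> exp (-t*(q - ln m))" by (rule exp_ge_add_one_self)
  finally have "m*(1 - t*(b/m - 1)) \<le> m * exp (-t*(q - ln m))" using mpos by simp
  moreover have "m*(1 - t*(b/m - 1)) = wam \<mu> a b" using mpos
    by (simp add: t_def m_def wam_def field_simps)
  moreover have "m * exp (-t*(q - ln m)) = exp (ln m + (-t*(q - ln m)))"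
    using mpos by (simp only: exp_add exp_ln)
  ultimately show "ln (wam \<mu> a b) \<le> (1-\<mu>) * k + ln (wgm \<mu> a b)"
    using E wpos by (simp add: ln_le_cancel_iff[symmetric])
qed


lemma gen_lemmas:
  fixes a b \<mu> :: real
  assumes a: "a > 0" and b: "b > 0" and m0: "0 \<le> \<mu>" and m1: "\<mu> \<le> 1"
  defines "c \<equiv> (sqrt a - sqrt b)^2" and "k \<equiv> 2*ln ((a+b)/2) - ln a - ln b"
  shows "min \<mu> (1-\<mu>) * c \<le> wam \<mu> a b - wgm \<mu> a b"
    and "wam \<mu> a b - wgm \<mu> a b \<le> max \<mu> (1-\<mu>) * c"
    and "min \<mu> (1-\<mu>) * k + ln (wgm \<mu> a b) \<le> ln (wam \<mu> a b)"
    and "ln (wam \<mu> a b) \<le> max \<mu> (1-\<mu>) * k + ln (wgm \<mu> a b)"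
proof -
  have "(min \<mu> (1-\<mu>) * c \<le> wam \<mu> a b - wgm \<mu> a b) \<and>
    (wam \<mu> a b - wgm \<mu> a b \<le> max \<mu> (1-\<mu>) * c) \<and>
    (min \<mu> (1-\<mu>) * k + ln (wgm \<mu> a b) \<le> ln (wam \<mu> a b)) \<and>
    (ln (wam \<mu> a b) \<le> max \<mu> (1-\<mu>) * k + ln (wgm \<mu> a b))"
  proof (cases "\<mu> \<le> 1/2")
    case True
    then have "min \<mu> (1-\<mu>) = \<mu>" "max \<mu> (1-\<mu>) = 1-\<mu>" by auto
    with half_lemmas[OF a b m0 True] show ?thesis by (simp add: c_def k_def)
  next
    case False
    then have mm: "min \<mu> (1-\<mu>) = 1-\<mu>" "max \<mu> (1-\<mu>) = 1-(1-\<mu>)" by auto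
    have h0: "0 \<le> 1-\<mu>" "1-\<mu> \<le> 1/2" using False m1 by auto
    have sw: "wam (1-\<mu>) b a = wam \<mu> a b" "wgm (1-\<mu>) b a = wgm \<mu> a b"
      by (simp_all add: wam_def wgm_def algebra_simps)
    have cc: "(sqrt b - sqrt a)^2 = c" by (simp add: c_def power2_commute)
    have kk: "2*ln ((b+a)/2) - ln b - ln a = k" by (simp add: k_def algebra_simps)
    show ?thesis using half_lemmas[OF b a h0] unfolding sw cc kk mm by simp
  qed
  then show "min \<mu> (1-\<mu>) * c \<le> wam \<mu> a b - wgm \<mu> a b"
    and "wam \<mu> a b - wgm \<mu> a b \<le> max \<mu> (1-\<mu>) * c"
    and "min \<mu> (1-\<mu>) * k + ln (wgm \<mu> a b) \<le> ln (wam \<mu> a b)"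
    and "ln (wam \<mu> a b) \<le> max \<mu> (1-\<mu>) * k + ln (wgm \<mu> a b)" by auto
qed


lemma ftc01:
  fixes G f :: "real \<Rightarrow> real"
  assumes "\<And>t. t \<in> {0..1} \<Longrightarrow> (G has_real_derivative f t) (at t)"
  shows "(f has_integral (G 1 - G 0)) {0..1}"
proof (rule fundamental_theorem_of_calculus)
  show "(0::real) \<le> 1" by simp
  fix x :: real assume x: "x \<in> {0..1}"
  have "(G has_real_derivative f x) (at x within {0..1})"
    by (rule has_field_derivative_at_within[OF assms[OF x]])
  then show "(G has_vector_derivative f x) (at x within {0..1})"
    by (simp add: has_real_derivative_iff_has_vector_derivative)
qed

lemma wam_pos: "a > 0 \<Longrightarrow> b > 0 \<Longrightarrow> 0 \<le> \<mu> \<Longrightarrow> \<mu> \<le> 1 \<Longrightarrow> wam \<mu> a b > 0"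
proof -
  assume a: "a > 0" and b: "b > 0" and m: "0 \<le> \<mu>" "\<mu> \<le> 1"
  show ?thesis
  proof (cases "\<mu> = 1")
    case True then show ?thesis using b by (simp add: wam_def)
  next
    case False
    then have "(1-\<mu>)*a > 0" using a m by simp
    moreover have "\<mu>*b \<ge> 0" using b m by simp
    ultimately show ?thesis by (simp add: wam_def)
  qed
qed

lemma intA:
  shows "((\<lambda>t. (1-\<nu>)*wam (\<nu>*t) a b + \<nu>*wam (1-(1-\<nu>)*t) a b) has_integral wam \<nu> a b) {0..1}"
proof -
  have "(\<lambda>t. (1-\<nu>)*wam (\<nu>*t) a b + \<nu>*wam (1-(1-\<nu>)*t) a b) = (\<lambda>t. wam \<nu> a b)"
    by (rule ext) (simp add: wam_def algebra_simps)
  then show ?thesis using has_integral_const_real[of "wam \<nu> a b" 0 1] by simp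
qed

lemma intD:
  assumes "a > 0" "b > 0"
  shows "((\<lambda>t. (1-\<nu>)*ln (wgm (\<nu>*t) a b) + \<nu>*ln (wgm (1-(1-\<nu>)*t) a b)) has_integral ln (wgm \<nu> a b)) {0..1}"
proof -
  have "(\<lambda>t. (1-\<nu>)*ln (wgm (\<nu>*t) a b) + \<nu>*ln (wgm (1-(1-\<nu>)*t) a b)) = (\<lambda>t. ln (wgm \<nu> a b))"
    by (rule ext) (simp add: wgm_exp assms algebra_simps)
  then show ?thesis using has_integral_const_real[of "ln (wgm \<nu> a b)" 0 1] by simp
qed

lemma alg1:
  fixes p q \<nu> E1 E2 :: real
  assumes pq: "p \<noteq> q"
  shows "0 < \<nu> \<Longrightarrow> \<nu> < 1 \<Longrightarrow> (1-\<nu>)/(\<nu>*(q-p)) * (E1 * (-(\<nu>*p) + \<nu>*q))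
     + \<nu>/((1-\<nu>)*(p-q)) * (E2 * ((1-\<nu>)*p - (1-\<nu>)*q)) = (1-\<nu>)*E1 + \<nu>*E2"
proof -
  assume n: "0 < \<nu>" "\<nu> < 1"
  have "-(\<nu>*p) + \<nu>*q = \<nu>*(q-p)" "(1-\<nu>)*p - (1-\<nu>)*q = (1-\<nu>)*(p-q)" by (simp_all add: algebra_simps)
  moreover have "q - p \<noteq> 0" "p - q \<noteq> 0" "\<nu> \<noteq> 0" "1 - \<nu> \<noteq> 0" using pq n by auto
  ultimately show ?thesis by simp
qed

lemma alg2:
  fixes d \<nu> g a b :: real
  assumes "d \<noteq> 0" "\<nu> \<noteq> 0" "1 - \<nu> \<noteq> 0"
  shows "(1-\<nu>)/(\<nu>*(-d))*g + \<nu>/((1-\<nu>)*d)*g - ((1-\<nu>)/(\<nu>*(-d))*a + \<nu>/((1-\<nu>)*d)*b)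
     = 1/d*((1-\<nu>)/\<nu>*(a-g)+\<nu>/(1-\<nu>)*(g-b))"
proof -
  define A where "A = (1-\<nu>)/(\<nu>*d)"
  define B where "B = \<nu>/((1-\<nu>)*d)"
  have e1: "(1-\<nu>)/(\<nu>*(-d)) = -A" by (simp add: A_def)
  have e2: "1/d*((1-\<nu>)/\<nu>*(a-g)+\<nu>/(1-\<nu>)*(g-b)) = A*(a-g) + B*(g-b)"
  proof -
    have "1/d*((1-\<nu>)/\<nu>*(a-g)+\<nu>/(1-\<nu>)*(g-b)) = ((1-\<nu>)/\<nu>/d)*(a-g)+(\<nu>/(1-\<nu>)/d)*(g-b)"
      by (simp add: distrib_left mult.commute)
    also have "(1-\<nu>)/\<nu>/d = A" by (simp add: A_def)
    also have "\<nu>/(1-\<nu>)/d = B" by (simp add: B_def)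
    finally show ?thesis .
  qed
  show ?thesis unfolding e1 e2 B_def[symmetric] by (simp add: algebra_simps)
qed

lemma intB:
  assumes a: "a > 0" and b: "b > 0" and ab: "a \<noteq> b" and n0: "0 < \<nu>" and n1: "\<nu> < 1"
  shows "((\<lambda>t. (1-\<nu>)*wgm (\<nu>*t) a b + \<nu>*wgm (1-(1-\<nu>)*t) a b) has_integral wlm \<nu> a b) {0..1}"
proof -
  define p q where "p = ln a" "q = ln b"
  have pq: "p \<noteq> q" using a b ab by (simp add: p_q_def)
  define G where "G t = (1-\<nu>)/(\<nu>*(q-p)) * exp ((1-\<nu>*t)*p + (\<nu>*t)*q)
     + \<nu>/((1-\<nu>)*(p-q)) * exp ((1-(1-(1-\<nu>)*t))*p + (1-(1-\<nu>)*t)*q)" for t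
  define f where "f t = (1-\<nu>)*exp ((1-\<nu>*t)*p + (\<nu>*t)*q) + \<nu>*exp ((1-(1-(1-\<nu>)*t))*p + (1-(1-\<nu>)*t)*q)" for t
  have der: "(G has_real_derivative f t) (at t)" for t
  proof -
    define e1 where "e1 t = exp ((1-\<nu>*t)*p + (\<nu>*t)*q)" for t
    define e2 where "e2 t = exp ((1-(1-(1-\<nu>)*t))*p + (1-(1-\<nu>)*t)*q)" for t
    have d1: "(e1 has_real_derivative e1 t * (\<nu>*(q-p))) (at t)"
      unfolding e1_def by (rule derivative_eq_intros refl)+ (simp add: algebra_simps)
    have d2: "(e2 has_real_derivative e2 t * ((1-\<nu>)*(p-q))) (at t)"
      unfolding e2_def by (rule derivative_eq_intros refl)+ (simp add: algebra_simps)
    have G': "G = (\<lambda>t. (1-\<nu>)/(\<nu>*(q-p)) * e1 t + \<nu>/((1-\<nu>)*(p-q)) * e2 t)"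
      by (rule ext) (simp add: G_def e1_def e2_def)
    have "(G has_real_derivative (1-\<nu>)/(\<nu>*(q-p)) * (e1 t * (\<nu>*(q-p))) + \<nu>/((1-\<nu>)*(p-q)) * (e2 t * ((1-\<nu>)*(p-q)))) (at t)"
      unfolding G' by (intro DERIV_add DERIV_cmult d1 d2)
    moreover have "(1-\<nu>)/(\<nu>*(q-p)) * (e1 t * (\<nu>*(q-p))) + \<nu>/((1-\<nu>)*(p-q)) * (e2 t * ((1-\<nu>)*(p-q))) = f t"
    proof -
      have "q - p \<noteq> 0" "p - q \<noteq> 0" "\<nu> \<noteq> 0" "1 - \<nu> \<noteq> 0" using pq n0 n1 by auto
      then show ?thesis by (simp add: f_def e1_def e2_def)
    qed
    ultimately show ?thesis by simp
  qed
  have I: "(f has_integral (G 1 - G 0)) {0..1}" by (rule ftc01) (rule der)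
  have feq: "f = (\<lambda>t. (1-\<nu>)*wgm (\<nu>*t) a b + \<nu>*wgm (1-(1-\<nu>)*t) a b)"
    by (rule ext) (simp add: f_def wgm_exp a b p_q_def algebra_simps)
  have g: "exp ((1-\<nu>)*p + \<nu>*q) = wgm \<nu> a b" by (simp add: wgm_exp a b p_q_def)
  have "G 1 - G 0 = wlm \<nu> a b"
  proof -
    have e1: "exp ((1-\<nu>*1)*p + (\<nu>*1)*q) = wgm \<nu> a b" using g by simp
    have e2: "exp ((1-\<nu>*0)*p + (\<nu>*0)*q) = a" using a by (simp add: p_q_def)
    have e3: "exp ((1-(1-(1-\<nu>)*1))*p + (1-(1-\<nu>)*1)*q) = wgm \<nu> a b" using g by simp
    have e4: "exp ((1-(1-(1-\<nu>)*0))*p + (1-(1-\<nu>)*0)*q) = b" using b by (simp add: p_q_def)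
    have "G 1 - G 0 = (1-\<nu>)/(\<nu>*(q-p)) * wgm \<nu> a b + \<nu>/((1-\<nu>)*(p-q)) * wgm \<nu> a b
        - ((1-\<nu>)/(\<nu>*(q-p)) * a + \<nu>/((1-\<nu>)*(p-q)) * b)"
      unfolding G_def by (simp only: e1 e2 e3 e4)
    also have "\<dots> = wlm \<nu> a b"
    proof -
      have qp: "q - p = -(p-q)" by simp
      have d: "p - q \<noteq> 0" "\<nu> \<noteq> 0" "1 - \<nu> \<noteq> 0" using pq n0 n1 by auto
      show ?thesis unfolding wlm_def p_q_def[symmetric] qp
        using alg2[OF d] by simp
    qed
    finally show ?thesis .
  qed
  then show ?thesis using I feq by simp
qed

lemma alg3:
  fixes n m d a b w la lb lw :: real
  assumes n: "n \<noteq> 0" and m: "m \<noteq> 0" and d: "d \<noteq> 0" and nm: "m = 1 - n"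
    and w: "w = m*a + n*b" and dd: "d = b - a"
  shows "m/(n*d)*(w*lw - w) + n/(m*(-d))*(w*lw - w) - (m/(n*d)*(a*la - a) + n/(m*(-d))*(b*lb - b))
     = -1 + ((1-2*n)*w/(n*m*d)) * lw + 1/d*(n*b/m*lb - m*a/n*la)"
proof -
  have "(m/(n*d)*(w*lw - w) + n/(m*(-d))*(w*lw - w) - (m/(n*d)*(a*la - a) + n/(m*(-d))*(b*lb - b))) * (n*m*d)
     = (-1 + ((1-2*n)*w/(n*m*d)) * lw + 1/d*(n*b/m*lb - m*a/n*la)) * (n*m*d)"
    using n m d by (simp add: field_simps) (simp add: nm w dd algebra_simps)
  then show ?thesis using n m d by simp
qed

lemma ln_wim:
  assumes a: "a > 0" and b: "b > 0" and ab: "a \<noteq> b" and n0: "0 < \<nu>" and n1: "\<nu> < 1"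
  shows "ln (wim \<nu> a b) = -1 + ((1 - 2*\<nu>)*wam \<nu> a b/(\<nu>*(1-\<nu>)*(b-a))) * ln (wam \<nu> a b)
      + 1/(b-a)*(\<nu>*b/(1-\<nu>)*ln b - (1-\<nu>)*a/\<nu>*ln a)"
proof -
  have w: "wam \<nu> a b > 0" using wam_pos[OF a b] n0 n1 by simp
  define Q where "Q = (b powr (\<nu> * b / (1 - \<nu>))) / (a powr ((1 - \<nu>) * a / \<nu>))"
  have Q: "Q > 0" using a b by (simp add: Q_def)
  have lQ: "ln Q = \<nu>*b/(1-\<nu>)*ln b - (1-\<nu>)*a/\<nu>*ln a"
    using a b by (simp add: Q_def ln_div)
  have "ln (wim \<nu> a b) = ln (1/exp 1) + ln (wam \<nu> a b powr (((1 - 2 * \<nu>) * wam \<nu> a b) / (\<nu> * (1 - \<nu>) * (b - a))))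
     + ln (Q powr (1/(b-a)))"
  proof -
    have p1: "1/exp 1 > (0::real)" by simp
    have p2: "wam \<nu> a b powr (((1 - 2 * \<nu>) * wam \<nu> a b) / (\<nu> * (1 - \<nu>) * (b - a))) > 0" using w by simp
    have p3: "Q powr (1/(b-a)) > 0" using Q by simp
    show ?thesis unfolding wim_def Q_def[symmetric]
      by (simp only: ln_mult_pos[OF mult_pos_pos[OF p1 p2] p3] ln_mult_pos[OF p1 p2])
  qed
  then show ?thesis using lQ by (simp add: ln_div)
qed

lemma intC:
  assumes a: "a > 0" and b: "b > 0" and ab: "a \<noteq> b" and n0: "0 < \<nu>" and n1: "\<nu> < 1"
  shows "((\<lambda>t. (1-\<nu>)*ln (wam (\<nu>*t) a b) + \<nu>*ln (wam (1-(1-\<nu>)*t) a b)) has_integral ln (wim \<nu> a b)) {0..1}"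
proof -
  define u where "u t = wam (\<nu>*t) a b" for t
  define v where "v t = wam (1-(1-\<nu>)*t) a b" for t
  define c1 where "c1 = (1-\<nu>)/(\<nu>*(b-a))"
  define c2 where "c2 = \<nu>/((1-\<nu>)*(-(b-a)))"
  define G where "G t = c1 * (u t * ln (u t) - u t) + c2 * (v t * ln (v t) - v t)" for t
  define f where "f t = (1-\<nu>)*ln (u t) + \<nu>*ln (v t)" for t
  have der: "(G has_real_derivative f t) (at t)" if t: "t \<in> {0..1}" for t
  proof -
    have upos: "u t > 0" unfolding u_def using t n0 n1 a b
      by (intro wam_pos) (auto intro: mult_le_one)
    have vpos: "v t > 0" unfolding v_def using t n0 n1 a b
      by (intro wam_pos) (auto simp: mult_le_one)
    have du: "(u has_real_derivative \<nu>*(b-a)) (at t)"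
      unfolding u_def wam_def by (rule derivative_eq_intros refl)+ (simp add: algebra_simps)
    have dv: "(v has_real_derivative (1-\<nu>)*(-(b-a))) (at t)"
      unfolding v_def wam_def by (rule derivative_eq_intros refl)+ (simp add: algebra_simps)
    have hu: "((\<lambda>t. u t * ln (u t) - u t) has_real_derivative ln (u t) * (\<nu>*(b-a))) (at t)"
      by (rule derivative_eq_intros du refl | use upos in simp)+
    have hv: "((\<lambda>t. v t * ln (v t) - v t) has_real_derivative ln (v t) * ((1-\<nu>)*(-(b-a)))) (at t)"
      by (rule derivative_eq_intros dv refl | use vpos in simp)+
    have "(G has_real_derivative c1 * (ln (u t) * (\<nu>*(b-a))) + c2 * (ln (v t) * ((1-\<nu>)*(-(b-a))))) (at t)"
      unfolding G_def[abs_def] by (intro DERIV_add DERIV_cmult hu hv)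
    moreover have "c1 * (ln (u t) * (\<nu>*(b-a))) + c2 * (ln (v t) * ((1-\<nu>)*(-(b-a)))) = f t"
    proof -
      have "b - a \<noteq> 0" "\<nu> \<noteq> 0" "1 - \<nu> \<noteq> 0" using ab n0 n1 by auto
      then show ?thesis by (simp add: c1_def c2_def f_def)
    qed
    ultimately show ?thesis by simp
  qed
  have I: "(f has_integral (G 1 - G 0)) {0..1}" by (rule ftc01) (rule der)
  have u1: "u 1 = wam \<nu> a b" "v 1 = wam \<nu> a b" "u 0 = a" "v 0 = b"
    by (simp_all add: u_def v_def wam_def)
  have "G 1 - G 0 = c1*(wam \<nu> a b*ln (wam \<nu> a b) - wam \<nu> a b) + c2*(wam \<nu> a b*ln (wam \<nu> a b) - wam \<nu> a b)
      - (c1*(a*ln a - a) + c2*(b*ln b - b))"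
    unfolding G_def u1 by simp
  also have "\<dots> = ln (wim \<nu> a b)"
    unfolding ln_wim[OF assms] c1_def c2_def
    using alg3[of \<nu> "1-\<nu>" "b-a" "wam \<nu> a b" a b "ln (wam \<nu> a b)" "ln a" "ln b"] ab n0 n1
    by (simp add: wam_def mult.assoc)
  finally have "(f has_integral ln (wim \<nu> a b)) {0..1}" using I by simp
  moreover have "f = (\<lambda>t. (1-\<nu>)*ln (wam (\<nu>*t) a b) + \<nu>*ln (wam (1-(1-\<nu>)*t) a b))"
    by (rule ext) (simp add: f_def u_def v_def)
  ultimately show ?thesis by simp
qed


lemma wim_pos:
  assumes a: "a > 0" and b: "b > 0" and n0: "0 < \<nu>" and n1: "\<nu> < 1"
  shows "wim \<nu> a b > 0"
proof -
  have w: "wam \<nu> a b > 0" using wam_pos[OF a b] n0 n1 by simp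
  have Q: "(b powr (\<nu> * b / (1 - \<nu>))) / (a powr ((1 - \<nu>) * a / \<nu>)) > 0" using a b by simp
  show ?thesis unfolding wim_def by (intro mult_pos_pos) (use w Q in auto)
qed

lemma ln_kant:
  assumes a: "a > 0" and b: "b > 0"
  shows "ln (kantorovich a b) = 2*ln ((a+b)/2) - ln a - ln b" and "kantorovich a b > 0"
proof -
  have K: "kantorovich a b = ((a+b)/2)^2 / (a*b)"
    by (simp add: kantorovich_def power2_eq_square field_simps)
  have m: "(a+b)/2 > 0" using a b by simp
  show "ln (kantorovich a b) = 2*ln ((a+b)/2) - ln a - ln b"
    unfolding K using a b m by (simp add: ln_div ln_mult ln_realpow)
  show "kantorovich a b > 0" unfolding K using a b m by simp
qed

theorem corollary2p20:
  fixes a b \<nu> :: real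
  assumes "a > 0" and "b > 0" and "a \<noteq> b" and "0 < \<nu>" and "\<nu> < 1"
  shows "r_tilde \<nu> * (sqrt a - sqrt b)^2 \<le> wam \<nu> a b - wlm \<nu> a b
       \<and> wam \<nu> a b - wlm \<nu> a b \<le> R_tilde \<nu> * (sqrt a - sqrt b)^2
       \<and> kantorovich a b powr r_tilde \<nu> * wgm \<nu> a b \<le> wim \<nu> a b
       \<and> wim \<nu> a b \<le> kantorovich a b powr R_tilde \<nu> * wgm \<nu> a b"
proof -
  note a = assms(1) and b = assms(2) and ab = assms(3) and n0 = assms(4) and n1 = assms(5)
  define c where "c = (sqrt a - sqrt b)^2"
  define k where "k = 2*ln ((a+b)/2) - ln a - ln b"
  define \<rho> where "\<rho> t = (1 - \<nu>) * r1 \<nu> t + \<nu> * r2 \<nu> t" for t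
  define P where "P t = (1 - \<nu>) * R1 \<nu> t + \<nu> * R2 \<nu> t" for t
  have c\<rho>: "continuous_on {0..1} \<rho>" unfolding \<rho>_def[abs_def] r1_def r2_def
    by (intro continuous_intros)
  have cP: "continuous_on {0..1} P" unfolding P_def[abs_def] R1_def R2_def
    by (intro continuous_intros)
  have i\<rho>: "(\<rho> has_integral r_tilde \<nu>) {0..1}"
    unfolding r_tilde_def \<rho>_def[symmetric]
    using integrable_continuous_interval[OF c\<rho>] by (rule integrable_integral)
  have iP: "(P has_integral R_tilde \<nu>) {0..1}"
    unfolding R_tilde_def P_def[symmetric]
    using integrable_continuous_interval[OF cP] by (rule integrable_integral)
  define A where "A t = (1-\<nu>)*wam (\<nu>*t) a b + \<nu>*wam (1-(1-\<nu>)*t) a b" for t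
  define B where "B t = (1-\<nu>)*wgm (\<nu>*t) a b + \<nu>*wgm (1-(1-\<nu>)*t) a b" for t
  define LA where "LA t = (1-\<nu>)*ln (wam (\<nu>*t) a b) + \<nu>*ln (wam (1-(1-\<nu>)*t) a b)" for t
  define LB where "LB t = (1-\<nu>)*ln (wgm (\<nu>*t) a b) + \<nu>*ln (wgm (1-(1-\<nu>)*t) a b)" for t
  have iA: "(A has_integral wam \<nu> a b) {0..1}" unfolding A_def[abs_def] by (rule intA)
  have iB: "(B has_integral wlm \<nu> a b) {0..1}" unfolding B_def[abs_def] by (rule intB[OF a b ab n0 n1])
  have iLA: "(LA has_integral ln (wim \<nu> a b)) {0..1}" unfolding LA_def[abs_def] by (rule intC[OF a b ab n0 n1])
  have iLB: "(LB has_integral ln (wgm \<nu> a b)) {0..1}" unfolding LB_def[abs_def] by (rule intD[OF a b])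
  have iD: "((\<lambda>t. A t - B t) has_integral wam \<nu> a b - wlm \<nu> a b) {0..1}"
    by (rule has_integral_diff[OF iA iB])
  have i\<rho>c: "((\<lambda>t. \<rho> t * c) has_integral r_tilde \<nu> * c) {0..1}"
    by (rule has_integral_mult_left[OF i\<rho>])
  have iPc: "((\<lambda>t. P t * c) has_integral R_tilde \<nu> * c) {0..1}"
    by (rule has_integral_mult_left[OF iP])
  have i\<rho>k: "((\<lambda>t. \<rho> t * k + LB t) has_integral r_tilde \<nu> * k + ln (wgm \<nu> a b)) {0..1}"
    by (rule has_integral_add[OF has_integral_mult_left[OF i\<rho>] iLB])
  have iPk: "((\<lambda>t. P t * k + LB t) has_integral R_tilde \<nu> * k + ln (wgm \<nu> a b)) {0..1}"
    by (rule has_integral_add[OF has_integral_mult_left[OF iP] iLB])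
  have pw: "\<rho> t * c \<le> A t - B t \<and> A t - B t \<le> P t * c \<and>
            \<rho> t * k + LB t \<le> LA t \<and> LA t \<le> P t * k + LB t" if t: "t \<in> {0..1}" for t
  proof -
    define m1 where "m1 = \<nu>*t"
    define m2 where "m2 = 1-(1-\<nu>)*t"
    have m1r: "0 \<le> m1" "m1 \<le> 1" using t n0 n1 by (auto simp: m1_def mult_le_one)
    have m2r: "0 \<le> m2" "m2 \<le> 1" using t n0 n1 by (auto simp: m2_def mult_le_one)
    have r1e: "r1 \<nu> t = min m1 (1-m1)" "R1 \<nu> t = max m1 (1-m1)"
      by (simp_all add: r1_def R1_def m1_def)
    have r2e: "r2 \<nu> t = min m2 (1-m2)" "R2 \<nu> t = max m2 (1-m2)"
      by (auto simp: r2_def R2_def m2_def)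
    note g1 = gen_lemmas[OF a b m1r, folded c_def k_def]
    note g2 = gen_lemmas[OF a b m2r, folded c_def k_def]
    have w1: "1 - \<nu> \<ge> 0" "\<nu> \<ge> 0" using n0 n1 by auto
    have Ae: "A t = (1-\<nu>)*wam m1 a b + \<nu>*wam m2 a b" by (simp add: A_def m1_def m2_def)
    have Be: "B t = (1-\<nu>)*wgm m1 a b + \<nu>*wgm m2 a b" by (simp add: B_def m1_def m2_def)
    have LAe: "LA t = (1-\<nu>)*ln (wam m1 a b) + \<nu>*ln (wam m2 a b)" by (simp add: LA_def m1_def m2_def)
    have LBe: "LB t = (1-\<nu>)*ln (wgm m1 a b) + \<nu>*ln (wgm m2 a b)" by (simp add: LB_def m1_def m2_def)
    have \<rho>e: "\<rho> t = (1-\<nu>)*min m1 (1-m1) + \<nu>*min m2 (1-m2)" by (simp add: \<rho>_def r1e r2e)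
    have Pe: "P t = (1-\<nu>)*max m1 (1-m1) + \<nu>*max m2 (1-m2)" by (simp add: P_def r1e r2e)
    have q1: "(1-\<nu>)*(min m1 (1-m1) * c) \<le> (1-\<nu>)*(wam m1 a b - wgm m1 a b)"
      by (rule mult_left_mono[OF g1(1) w1(1)])
    have q2: "\<nu>*(min m2 (1-m2) * c) \<le> \<nu>*(wam m2 a b - wgm m2 a b)"
      by (rule mult_left_mono[OF g2(1) w1(2)])
    have q3: "(1-\<nu>)*(wam m1 a b - wgm m1 a b) \<le> (1-\<nu>)*(max m1 (1-m1) * c)"
      by (rule mult_left_mono[OF g1(2) w1(1)])
    have q4: "\<nu>*(wam m2 a b - wgm m2 a b) \<le> \<nu>*(max m2 (1-m2) * c)"
      by (rule mult_left_mono[OF g2(2) w1(2)])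
    have q5: "(1-\<nu>)*(min m1 (1-m1) * k + ln (wgm m1 a b)) \<le> (1-\<nu>)*ln (wam m1 a b)"
      by (rule mult_left_mono[OF g1(3) w1(1)])
    have q6: "\<nu>*(min m2 (1-m2) * k + ln (wgm m2 a b)) \<le> \<nu>*ln (wam m2 a b)"
      by (rule mult_left_mono[OF g2(3) w1(2)])
    have q7: "(1-\<nu>)*ln (wam m1 a b) \<le> (1-\<nu>)*(max m1 (1-m1) * k + ln (wgm m1 a b))"
      by (rule mult_left_mono[OF g1(4) w1(1)])
    have q8: "\<nu>*ln (wam m2 a b) \<le> \<nu>*(max m2 (1-m2) * k + ln (wgm m2 a b))"
      by (rule mult_left_mono[OF g2(4) w1(2)])
    show ?thesis unfolding Ae Be LAe LBe \<rho>e Pe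
      using q1 q2 q3 q4 q5 q6 q7 q8 by (simp add: algebra_simps)
  qed
  have I1: "r_tilde \<nu> * c \<le> wam \<nu> a b - wlm \<nu> a b"
    by (rule has_integral_le[OF i\<rho>c iD]) (use pw in blast)
  have I2: "wam \<nu> a b - wlm \<nu> a b \<le> R_tilde \<nu> * c"
    by (rule has_integral_le[OF iD iPc]) (use pw in blast)
  have I3: "r_tilde \<nu> * k + ln (wgm \<nu> a b) \<le> ln (wim \<nu> a b)"
    by (rule has_integral_le[OF i\<rho>k iLA]) (use pw in blast)
  have I4: "ln (wim \<nu> a b) \<le> R_tilde \<nu> * k + ln (wgm \<nu> a b)"
    by (rule has_integral_le[OF iLA iPk]) (use pw in blast)
  have Kp: "kantorovich a b > 0" and lK: "ln (kantorovich a b) = k"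
    using ln_kant[OF a b] by (simp_all add: k_def)
  have gp: "wgm \<nu> a b > 0" using a b by (simp add: wgm_def)
  have Ip: "wim \<nu> a b > 0" by (rule wim_pos[OF a b n0 n1])
  have e: "kantorovich a b powr x * wgm \<nu> a b = exp (x * k + ln (wgm \<nu> a b))" for x
    using Kp gp lK by (simp add: powr_def exp_add)
  have I5: "kantorovich a b powr r_tilde \<nu> * wgm \<nu> a b \<le> wim \<nu> a b"
    unfolding e using I3 Ip by (metis exp_le_cancel_iff exp_ln)
  have I6: "wim \<nu> a b \<le> kantorovich a b powr R_tilde \<nu> * wgm \<nu> a b"
    unfolding e using I4 Ip by (metis exp_le_cancel_iff exp_ln)
  show ?thesis using I1 I2 I5 I6 by (simp add: c_def)
qed

end
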